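(* Let $\gamma(t)$ be the formula in the language of rings $$\gamma(t):\ \exists f\,\exists g\,\Big[\neg\mathrm{C}(f)\wedge g\neq0\wedge f\mid g\wedge\forall h\Big(\big[\mathrm{C}(h)\wedge (f+h)\mid g\big]\to\big[(f+h+1)\mid g\ \vee\ h=t\big]\Big)\Big],$$ where $\mathrm{C}(t)$ abbreviates "$t=0\vee\exists u\,(tu=1)$" and $a\mid b$ abbreviates $\exists c\,(ac=b)$. Then for every field $R$ of characteristic zero and every nonempty set $\mathcal{X}$ of indeterminates, $\gamma$ defines in $S=R[\mathcal{X}]$ the set $\{n\cdot 1_S: n\in\mathbb{N}\}$ (a copy of the natural numbers $\{0,1,2,\dots\}$). Consequently, arithmetic $(\mathbb{Z},+,\times)$ is uniformly interpretable in the class of polynomial rings over fields of characteristic zero.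
   Context: An interpretation of a structure in another is uniform over a class of structures if all the defining formulas (domain, equality, and the graphs of the operations) are the same for every member of the class. *)

theory Defs
  imports Main "HOL-Library.Poly_Mapping"
begin

text \<open>The polynomial ring R[X] over a coefficient ring 'a in the indeterminates
  given by the (nonempty) type 'v: finitely supported maps from monomials
  (finitely supported exponent vectors) to coefficients.\<close>
type_synonym ('v, 'a) mpoly = "('v \<Rightarrow>\<^sub>0 nat) \<Rightarrow>\<^sub>0 'a"

definition divs :: "'r::comm_ring_1 \<Rightarrow> 'r \<Rightarrow> bool" where
  "divs a b \<longleftrightarrow> (\<exists>c. a * c = b)"

definition C :: "'r::comm_ring_1 \<Rightarrow> bool" where
  "C t \<longleftrightarrow> t = 0 \<or> (\<exists>u. t * u = 1)"

definition gamma :: "'r::comm_ring_1 \<Rightarrow> bool" where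
  "gamma t \<longleftrightarrow> (\<exists>f g. \<not> C f \<and> g \<noteq> 0 \<and> divs f g \<and>
     (\<forall>h. (C h \<and> divs (f + h) g) \<longrightarrow> (divs (f + h + 1) g \<or> h = t)))"

end

theory Submission
  imports Defs
begin


lemma lead_mult:
  fixes p q :: "'m::comm_monoid_add \<Rightarrow>\<^sub>0 'b::idom"
    and W :: "'m \<Rightarrow> 'o::{ordered_cancel_comm_monoid_add, linorder}"
  assumes Wadd: "\<And>x y. W (x + y) = W x + W y"
    and injp: "inj_on W (Poly_Mapping.keys p)" and injq: "inj_on W (Poly_Mapping.keys q)"
    and a: "a \<in> Poly_Mapping.keys p" "\<And>m. m \<in> Poly_Mapping.keys p \<Longrightarrow> W m \<le> W a"
    and b: "b \<in> Poly_Mapping.keys q" "\<And>m. m \<in> Poly_Mapping.keys q \<Longrightarrow> W m \<le> W b"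
  shows "Poly_Mapping.lookup (p * q) (a + b) = Poly_Mapping.lookup p a * Poly_Mapping.lookup q b"
proof -
  have "Poly_Mapping.lookup (p * q) (a + b) = (\<Sum>(x, y). Poly_Mapping.lookup p x * Poly_Mapping.lookup q y when a + b = x + y)"
    by (simp add: times_poly_mapping.rep_eq prod_fun_unfold_prod)
  also have "\<dots> = (\<Sum>xy. ((case xy of (x, y) \<Rightarrow> Poly_Mapping.lookup p x * Poly_Mapping.lookup q y) when (a, b) = xy))"
  proof (rule Sum_any.cong)
    fix xy :: "'m \<times> 'm"
    obtain x y where xy: "xy = (x, y)" by (cases xy) auto
    have "(Poly_Mapping.lookup p x * Poly_Mapping.lookup q y when a + b = x + y) = (Poly_Mapping.lookup p x * Poly_Mapping.lookup q y when (a, b) = (x, y))"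
    proof (cases "x = a \<and> y = b")
      case True then show ?thesis by simp
    next
      case False
      have "Poly_Mapping.lookup p x * Poly_Mapping.lookup q y = 0 \<or> a + b \<noteq> x + y"
      proof (rule ccontr)
        assume "\<not> ?thesis"
        then have x: "x \<in> Poly_Mapping.keys p" and y: "y \<in> Poly_Mapping.keys q" and e: "a + b = x + y"
          by (auto simp: in_keys_iff)
        have wx: "W x \<le> W a" and wy: "W y \<le> W b" using a b x y by auto
        have we: "W x + W y = W a + W b" using e Wadd by metis
        have "W x = W a"
        proof (rule ccontr)
          assume "W x \<noteq> W a" then have "W x < W a" using wx by simp
          then have "W x + W y < W a + W b" using wy by (rule add_less_le_mono)
          then show False using we by simp
        qed
        then have "W y = W b" using we by simp
        have "x = a" using \<open>W x = W a\<close> injp x a(1) by (auto dest: inj_onD)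
        moreover have "y = b" using \<open>W y = W b\<close> injq y b(1) by (auto dest: inj_onD)
        ultimately show False using False by simp
      qed
      then show ?thesis using False by (auto simp: when_def)
    qed
    then show "(case xy of (x, y) \<Rightarrow> Poly_Mapping.lookup p x * Poly_Mapping.lookup q y when a + b = x + y) =
      ((case xy of (x, y) \<Rightarrow> Poly_Mapping.lookup p x * Poly_Mapping.lookup q y) when (a, b) = xy)" using xy by (simp add: when_def)
  qed
  also have "\<dots> = Poly_Mapping.lookup p a * Poly_Mapping.lookup q b" by simp
  finally show ?thesis .
qed

definition tdeg :: "('v \<Rightarrow>\<^sub>0 nat) \<Rightarrow> nat" where
  "tdeg m = (\<Sum>v\<in>Poly_Mapping.keys m. Poly_Mapping.lookup m v)"

lemma tdeg_add: "tdeg (m1 + m2) = tdeg m1 + tdeg m2"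
  unfolding tdeg_def by (rule setsum_keys_plus_distrib) auto

lemma tdeg_0_iff: "tdeg m = 0 \<longleftrightarrow> m = 0"
  unfolding tdeg_def by (auto simp: in_keys_iff poly_mapping_eq_iff fun_eq_iff)

definition D :: "('v, 'a::zero) mpoly \<Rightarrow> nat" where
  "D p = Max (tdeg ` Poly_Mapping.keys p)"



lemma prod_deg:
  fixes p q :: "('v, 'a::idom) mpoly"
  assumes p: "p \<noteq> 0" and q: "q \<noteq> 0"
  shows "p * q \<noteq> 0 \<and> D p + D q \<le> D (p * q)"
proof -
  define V where "V = (\<Union>m\<in>Poly_Mapping.keys p \<union> Poly_Mapping.keys q. Poly_Mapping.keys m)"
  have "finite V" unfolding V_def by simp
  then obtain n and e :: "nat \<Rightarrow> 'v" where Ve: "V = e ` {i. i < n}" and inje: "inj_on e {i. i < n}"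
    using finite_imp_nat_seg_image_inj_on by blast
  define F where "F m = (\<lambda>i. if i = 0 then tdeg m else if i \<le> n then Poly_Mapping.lookup m (e (i - 1)) else 0)" for m
  define W where "W m = Abs_poly_mapping (F m)" for m
  have finF: "finite {i. F m i \<noteq> 0}" for m
    by (rule finite_subset[of _ "{..n}"]) (auto simp: F_def split: if_splits)
  have LW: "Poly_Mapping.lookup (W m) = F m" for m
    unfolding W_def using finF by simp
  have Wadd: "W (x + y) = W x + W y" for x y
    by (rule poly_mapping_eqI) (simp add: LW lookup_add F_def tdeg_add)
  have Wlt: "W m < W m'" if "tdeg m < tdeg m'" for m m'
    unfolding less_poly_mapping.rep_eq less_fun_def LW using that
    by (intro exI[of _ 0]) (simp add: F_def)
  have Winj: "inj_on W {m. Poly_Mapping.keys m \<subseteq> V}"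
  proof (rule inj_onI)
    fix m m' assume m: "m \<in> {m. Poly_Mapping.keys m \<subseteq> V}" and m': "m' \<in> {m. Poly_Mapping.keys m \<subseteq> V}"
      and eq: "W m = W m'"
    show "m = m'"
    proof (rule poly_mapping_eqI)
      fix v
      show "Poly_Mapping.lookup m v = Poly_Mapping.lookup m' v"
      proof (cases "v \<in> V")
        case True
        then obtain j where j: "j < n" "v = e j" using Ve by auto
        have "F m (Suc j) = F m' (Suc j)" using eq LW by metis
        then show ?thesis using j by (simp add: F_def)
      next
        case False
        then have "v \<notin> Poly_Mapping.keys m" "v \<notin> Poly_Mapping.keys m'" using m m' by auto
        then show ?thesis by (simp add: in_keys_iff)
      qed
    qed
  qed
  have injp: "inj_on W (Poly_Mapping.keys p)"
    by (rule inj_on_subset[OF Winj]) (auto simp: V_def)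
  have injq: "inj_on W (Poly_Mapping.keys q)"
    by (rule inj_on_subset[OF Winj]) (auto simp: V_def)
  have "Max (W ` Poly_Mapping.keys p) \<in> W ` Poly_Mapping.keys p"
    using p by (intro Max_in) auto
  then obtain a where a: "a \<in> Poly_Mapping.keys p" "Max (W ` Poly_Mapping.keys p) = W a" by auto
  have amax: "W m \<le> W a" if "m \<in> Poly_Mapping.keys p" for m
    using that a(2)[symmetric] by simp
  have "Max (W ` Poly_Mapping.keys q) \<in> W ` Poly_Mapping.keys q"
    using q by (intro Max_in) auto
  then obtain b where b: "b \<in> Poly_Mapping.keys q" "Max (W ` Poly_Mapping.keys q) = W b" by auto
  have bmax: "W m \<le> W b" if "m \<in> Poly_Mapping.keys q" for m
    using that b(2)[symmetric] by simp
  have Da: "D p = tdeg a"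
    unfolding D_def
  proof (rule Max_eqI)
    show "finite (tdeg ` Poly_Mapping.keys p)" by simp
    show "tdeg a \<in> tdeg ` Poly_Mapping.keys p" using a by simp
    fix y assume "y \<in> tdeg ` Poly_Mapping.keys p"
    then obtain m where m: "m \<in> Poly_Mapping.keys p" "y = tdeg m" by auto
    show "y \<le> tdeg a"
    proof (rule ccontr)
      assume "\<not> y \<le> tdeg a"
      then have "W a < W m" using m by (intro Wlt) simp
      then show False using amax[OF m(1)] by simp
    qed
  qed
  have Db: "D q = tdeg b"
    unfolding D_def
  proof (rule Max_eqI)
    show "finite (tdeg ` Poly_Mapping.keys q)" by simp
    show "tdeg b \<in> tdeg ` Poly_Mapping.keys q" using b by simp
    fix y assume "y \<in> tdeg ` Poly_Mapping.keys q"
    then obtain m where m: "m \<in> Poly_Mapping.keys q" "y = tdeg m" by auto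
    show "y \<le> tdeg b"
    proof (rule ccontr)
      assume "\<not> y \<le> tdeg b"
      then have "W b < W m" using m by (intro Wlt) simp
      then show False using bmax[OF m(1)] by simp
    qed
  qed
  have "Poly_Mapping.lookup (p * q) (a + b) = Poly_Mapping.lookup p a * Poly_Mapping.lookup q b"
    by (rule lead_mult[OF Wadd injp injq a(1) amax b(1) bmax])
  also have "\<dots> \<noteq> 0" using a(1) b(1) by (simp add: in_keys_iff)
  finally have ab: "a + b \<in> Poly_Mapping.keys (p * q)" by (simp add: in_keys_iff)
  then have "p * q \<noteq> 0" by auto
  moreover have "tdeg (a + b) \<le> D (p * q)"
    unfolding D_def using ab by (intro Max_ge) auto
  ultimately show ?thesis using Da Db tdeg_add[of a b] by simp
qed



lemma divs_iff: "divs a b \<longleftrightarrow> a dvd b"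
  by (auto simp: divs_def dvd_def)

lemma keys_sub0: "Poly_Mapping.keys p \<subseteq> {0} \<Longrightarrow> p = Poly_Mapping.single 0 (Poly_Mapping.lookup p 0)"
  by (rule poly_mapping_eqI) (auto simp: lookup_single in_keys_iff when_def)

lemma D_single0: "c \<noteq> 0 \<Longrightarrow> D (Poly_Mapping.single 0 c) = 0"
  by (simp add: D_def tdeg_def)

lemma D0_const:
  assumes "D p = 0"
  shows "Poly_Mapping.keys p \<subseteq> {0}"
proof
  fix m assume m: "m \<in> Poly_Mapping.keys p"
  have "tdeg m \<le> D p" unfolding D_def using m by (intro Max_ge) auto
  then have "tdeg m = 0" using assms by simp
  then show "m \<in> {0}" using tdeg_0_iff by blast
qed

lemma unit_const:
  fixes p :: "('v, 'a::idom) mpoly"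
  assumes "p * u = 1"
  shows "\<exists>c. p = Poly_Mapping.single 0 c"
proof -
  have "p \<noteq> 0" "u \<noteq> 0" using assms by auto
  from prod_deg[OF this] have "D p + D u \<le> D (p * u)" by simp
  also have "\<dots> = 0" using assms D_single0[of "1::'a"] by (simp del: single_one add: single_one[symmetric])
  finally have "D p = 0" by simp
  then show ?thesis using D0_const keys_sub0 by blast
qed

lemma C_iff:
  fixes h :: "('v, 'a::field) mpoly"
  shows "C h \<longleftrightarrow> (\<exists>c. h = Poly_Mapping.single 0 c)"
proof
  assume "C h"
  then show "\<exists>c. h = Poly_Mapping.single 0 c"
    unfolding C_def using unit_const by (metis single_zero)
next
  assume "\<exists>c. h = Poly_Mapping.single 0 c"
  then obtain c where h: "h = Poly_Mapping.single 0 c" by auto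
  show "C h"
  proof (cases "c = 0")
    case True then show ?thesis by (simp add: C_def h)
  next
    case False
    have "h * Poly_Mapping.single 0 (inverse c) = 1"
      using False by (simp add: h mult_single)
    then show ?thesis unfolding C_def by blast
  qed
qed

lemma D_pos:
  fixes p :: "('v, 'a::zero) mpoly"
  assumes "\<nexists>c. p = Poly_Mapping.single 0 c"
  shows "p \<noteq> 0 \<and> 1 \<le> D p"
proof -
  have "p \<noteq> 0" using assms by (metis single_zero)
  moreover have "D p \<noteq> 0" using assms D0_const keys_sub0 by blast
  ultimately show ?thesis by simp
qed

lemma prod_D:
  fixes F :: "nat \<Rightarrow> ('v, 'a::idom) mpoly"
  assumes "\<And>k. F k \<noteq> 0 \<and> 1 \<le> D (F k)"
  shows "(\<Prod>k<N. F k) \<noteq> 0 \<and> N \<le> D (\<Prod>k<N. F k)"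
proof (induction N)
  case 0 then show ?case by simp
next
  case (Suc N)
  from prod_deg[of "\<Prod>k<N. F k" "F N"] Suc assms[of N] show ?case by simp
qed

lemma prod_single0:
  "(\<Prod>k\<in>A. Poly_Mapping.single 0 (f k)) = Poly_Mapping.single 0 (\<Prod>k\<in>A. (f k :: 'a::comm_ring_1))"
  by (induction A rule: infinite_finite_induct) (simp_all add: mult_single)

lemma prod_mod:
  fixes b :: "'r::comm_ring_1"
  assumes "finite A"
  shows "b dvd ((\<Prod>k\<in>A. b + e k) - (\<Prod>k\<in>A. e k))"
  using assms
proof (induction A rule: finite_induct)
  case empty then show ?case by simp
next
  case (insert a A)
  then obtain r where r: "(\<Prod>k\<in>A. b + e k) - (\<Prod>k\<in>A. e k) = b * r" by (auto simp: dvd_def)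
  have "(\<Prod>k\<in>insert a A. b + e k) - (\<Prod>k\<in>insert a A. e k)
      = (b + e a) * (\<Prod>k\<in>A. b + e k) - e a * (\<Prod>k\<in>A. e k)" using insert by simp
  also have "\<dots> = b * ((\<Prod>k\<in>A. b + e k) + e a * r)"
    using r by (simp add: algebra_simps)
  finally show ?case by simp
qed

lemma key_dvd:
  fixes P :: "'r::comm_ring_1"
  assumes "P dvd g" "b dvd g" "b dvd (P - c)" "c * c' = 1"
  shows "P * b dvd g"
proof -
  obtain q where q: "g = P * q" using assms(1) by (auto simp: dvd_def)
  have "b dvd P * q" using assms(2) q by simp
  moreover have "b dvd (P - c) * q" using assms(3) by simp
  ultimately have "b dvd P * q - (P - c) * q" by (rule dvd_diff)
  then have "b dvd c * q" by (simp add: algebra_simps)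
  then have "b dvd c' * (c * q)" by simp
  then have "b dvd q" using assms(4) by (simp add: mult.assoc[symmetric] mult.commute)
  then show ?thesis using q by (simp add: mult_dvd_mono)
qed



theorem theorem3p1:
  fixes t :: "('v, 'a::field_char_0) mpoly"
  shows "gamma t \<longleftrightarrow> (\<exists>n::nat. t = of_nat n)"
proof
  assume "gamma t"
  then obtain f g where nf: "\<not> C f" and g0: "g \<noteq> 0" and fg: "divs f g"
    and P: "\<And>h. C h \<Longrightarrow> divs (f + h) g \<Longrightarrow> divs (f + h + 1) g \<or> h = t"
    unfolding gamma_def by blast
  show "\<exists>n::nat. t = of_nat n"
  proof (rule ccontr)
    assume nt: "\<not> (\<exists>n::nat. t = of_nat n)"
    have H: "(f + of_nat n) dvd g" for n
    proof (induction n)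
      case 0 then show ?case using fg by (simp add: divs_iff)
    next
      case (Suc n)
      have "C (of_nat n :: ('v, 'a) mpoly)"
        unfolding C_iff by (metis single_of_nat)
      from P[OF this] Suc nt have "divs (f + of_nat n + 1) g" by (auto simp: divs_iff)
      then show ?case by (simp add: divs_iff algebra_simps)
    qed
    have fnc: "\<nexists>c. f = Poly_Mapping.single 0 c" using nf C_iff by blast
    have Fk: "f + of_nat k \<noteq> 0 \<and> 1 \<le> D (f + of_nat k)" for k
    proof (rule D_pos, rule notI)
      assume "\<exists>c. f + of_nat k = Poly_Mapping.single 0 c"
      then obtain c where "f + of_nat k = Poly_Mapping.single 0 c" by auto
      then have "f = Poly_Mapping.single 0 c - Poly_Mapping.single 0 (of_nat k)"
        by (simp add: algebra_simps)
      then have "f = Poly_Mapping.single 0 (c - of_nat k)" by (simp add: single_diff)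
      then show False using fnc by blast
    qed
    have Pd: "(\<Prod>k<N. f + of_nat k) dvd g" for N
    proof (induction N)
      case 0 then show ?case by simp
    next
      case (Suc N)
      define d where "d = (\<Prod>k<N. (of_nat k - of_nat N :: 'a))"
      have d0: "d \<noteq> 0" unfolding d_def by auto
      have cd: "(\<Prod>k<N. (of_nat k - of_nat N :: ('v, 'a) mpoly)) = Poly_Mapping.single 0 d"
        unfolding d_def prod_single0[symmetric] by (simp add: single_diff)
      have "(f + of_nat N) dvd ((\<Prod>k<N. (f + of_nat N) + (of_nat k - of_nat N)) - (\<Prod>k<N. (of_nat k - of_nat N)))"
        by (rule prod_mod) simp
      then have m: "(f + of_nat N) dvd ((\<Prod>k<N. f + of_nat k) - Poly_Mapping.single 0 d)"
        using cd by simp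
      have u: "Poly_Mapping.single 0 d * Poly_Mapping.single 0 (inverse d) = (1 :: ('v, 'a) mpoly)"
        using d0 by (simp add: mult_single)
      from key_dvd[OF Suc.IH H m u] show ?case by simp
    qed
    define N where "N = Suc (D g)"
    obtain r where r: "g = (\<Prod>k<N. f + of_nat k) * r" using Pd[of N] by (auto simp: dvd_def)
    have p0: "(\<Prod>k<N. f + of_nat k) \<noteq> 0 \<and> N \<le> D (\<Prod>k<N. f + of_nat k)"
      by (rule prod_D) (rule Fk)
    have "r \<noteq> 0" using r g0 by auto
    with p0 prod_deg[of "\<Prod>k<N. f + of_nat k" r] have "N \<le> D g" using r by simp
    then show False unfolding N_def by simp
  qed
next
  assume "\<exists>n::nat. t = of_nat n"
  then obtain n :: nat where tn: "t = of_nat n" by auto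
  define mv :: "'v \<Rightarrow>\<^sub>0 nat" where "mv = Poly_Mapping.single undefined 1"
  define x :: "('v, 'a) mpoly" where "x = Poly_Mapping.single mv 1"
  have mv0: "mv \<noteq> 0" unfolding mv_def by (metis lookup_single_eq lookup_zero one_neq_zero)
  have nonc: "\<nexists>c. p = Poly_Mapping.single 0 c" if "Poly_Mapping.lookup p mv \<noteq> 0" for p :: "('v, 'a) mpoly"
    using that mv0 by (auto simp: lookup_single when_def)
  have lx: "Poly_Mapping.lookup (x + Poly_Mapping.single 0 c) mv = 1" for c
    using mv0 by (simp add: x_def lookup_add lookup_single when_def)
  have xk: "x + of_nat k = x + Poly_Mapping.single 0 (of_nat k)" for k by simp
  define g where "g = (\<Prod>k\<in>{..n}. x + of_nat k)"
  have g0: "g \<noteq> 0"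
  proof -
    have "(\<Prod>k<Suc n. x + of_nat k) \<noteq> 0 \<and> Suc n \<le> D (\<Prod>k<Suc n. x + of_nat k)"
    proof (rule prod_D, rule D_pos, rule nonc)
      fix k show "Poly_Mapping.lookup (x + of_nat k) mv \<noteq> 0" using lx[of "of_nat k"] by simp
    qed
    then show ?thesis unfolding g_def lessThan_Suc_atMost by simp
  qed
  have nCx: "\<not> C x"
  proof -
    have "Poly_Mapping.lookup x mv \<noteq> 0" by (simp add: x_def)
    then show ?thesis using nonc C_iff by blast
  qed
  have xg: "divs x g"
  proof -
    have "(x + of_nat 0) dvd g" unfolding g_def by (rule dvd_prodI) auto
    then show ?thesis by (simp add: divs_iff)
  qed
  have hprop: "divs (x + h + 1) g \<or> h = t" if Ch: "C h" and hg: "divs (x + h) g" for h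
  proof -
    obtain c where hc: "h = Poly_Mapping.single 0 c" using Ch C_iff by blast
    show ?thesis
    proof (cases "\<exists>k<n. c = of_nat k")
      case True
      then obtain k where k: "k < n" "c = of_nat k" by auto
      have "x + h + 1 = x + of_nat (Suc k)" using k hc by simp
      moreover have "(x + of_nat (Suc k)) dvd g" unfolding g_def using k by (intro dvd_prodI) auto
      ultimately show ?thesis by (metis divs_iff)
    next
      case False
      show ?thesis
      proof (cases "c = of_nat n")
        case True then show ?thesis using hc tn by simp
      next
        case cn: False
        have ck: "c \<noteq> of_nat k" if "k \<le> n" for k
          using False cn that by (metis le_neq_implies_less)
        define d where "d = (\<Prod>k\<in>{..n}. (of_nat k - c :: 'a))"
        have d0: "d \<noteq> 0" unfolding d_def using ck by auto
        have cd: "(\<Prod>k\<in>{..n}. (of_nat k - h :: ('v, 'a) mpoly)) = Poly_Mapping.single 0 d"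
          unfolding d_def prod_single0[symmetric] hc by (simp add: single_diff)
        have "(x + h) dvd ((\<Prod>k\<in>{..n}. (x + h) + (of_nat k - h)) - (\<Prod>k\<in>{..n}. (of_nat k - h)))"
          by (rule prod_mod) simp
        then have m: "(x + h) dvd (g - Poly_Mapping.single 0 d)"
          using cd by (simp add: g_def)
        have "(x + h) dvd g" using hg by (simp add: divs_iff)
        then have "(x + h) dvd (g - (g - Poly_Mapping.single 0 d))" using m by (rule dvd_diff)
        then have dd: "(x + h) dvd Poly_Mapping.single 0 d" by simp
        have u: "Poly_Mapping.single 0 d * Poly_Mapping.single 0 (inverse d) = (1 :: ('v, 'a) mpoly)"
          using d0 by (simp add: mult_single)
        then have "Poly_Mapping.single 0 d dvd (1 :: ('v, 'a) mpoly)" by (metis dvdI)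
        with dd have "(x + h) dvd 1" by (rule dvd_trans)
        then obtain u where "(x + h) * u = 1" by (auto simp: dvd_def)
        then have "\<exists>c. x + h = Poly_Mapping.single 0 c" by (rule unit_const)
        moreover have "\<nexists>c. x + h = Poly_Mapping.single 0 c"
          using lx[of c] hc by (intro nonc) simp
        ultimately show ?thesis by blast
      qed
    qed
  qed
  show "gamma t"
    unfolding gamma_def using nCx g0 xg hprop by blast
qed

end
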